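(* Let $n\geq 3$ and let $A$ and $B$ be two $n\times n$ generalized tournament matrices with the same principal minors of orders at most $4$. Suppose that $A$ is separable. If there is no $\alpha>1/2$ such that $A$ and $B$ are both $\alpha$-linear, then $A$ and $B$ have a common nontrivial clan.
   Context: A generalized tournament matrix of order $n$ is a real $n\times n$ matrix $M=(m_{ij})$ with nonnegative entries satisfying $M+M^{t}=J_n-I_n$. Write $[n]=\{1,\ldots,n\}$. A clan of $M$ is a subset $X\subseteq[n]$ such that for all $i,j\in X$ and $k\in[n]\setminus X$, $m_{ik}=m_{jk}$ and $m_{ki}=m_{kj}$; the empty set, singletons and $[n]$ are trivial clans. $M$ is separable if $[n]$ can be partitioned into two nonempty clans. For $\alpha>1/2$, $M$ is $\alpha$-linear if there is an ordering $x_1,\ldots,x_n$ of $[n]$ with $m_{x_ix_j}=\alpha$ whenever $i<j$. *)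

theory Defs
  imports "HOL-Analysis.Analysis"
begin

text \<open>Real n-by-n matrices are represented as functions nat => nat => real,
  only the entries with indices in {0..<n} being relevant; [n] is rendered as {0..<n}.\<close>

definition gen_tournament :: "nat \<Rightarrow> (nat \<Rightarrow> nat \<Rightarrow> real) \<Rightarrow> bool" where
  "gen_tournament n M \<longleftrightarrow>
     (\<forall>i<n. \<forall>j<n. M i j \<ge> 0) \<and>
     (\<forall>i<n. \<forall>j<n. M i j + M j i = (if i = j then 0 else 1))"

definition principal_minor :: "(nat \<Rightarrow> nat \<Rightarrow> real) \<Rightarrow> nat set \<Rightarrow> real" where
  "principal_minor M I = (\<Sum>p\<in>{p. p permutes I}. of_int (sign p) * (\<Prod>i\<in>I. M i (p i)))"

definition is_clan :: "nat \<Rightarrow> (nat \<Rightarrow> nat \<Rightarrow> real) \<Rightarrow> nat set \<Rightarrow> bool" where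
  "is_clan n M X \<longleftrightarrow> X \<subseteq> {0..<n} \<and>
     (\<forall>i\<in>X. \<forall>j\<in>X. \<forall>k\<in>{0..<n} - X. M i k = M j k \<and> M k i = M k j)"

definition trivial_clan :: "nat \<Rightarrow> nat set \<Rightarrow> bool" where
  "trivial_clan n X \<longleftrightarrow> X = {} \<or> card X = 1 \<or> X = {0..<n}"

definition separable :: "nat \<Rightarrow> (nat \<Rightarrow> nat \<Rightarrow> real) \<Rightarrow> bool" where
  "separable n M \<longleftrightarrow> (\<exists>X Y. X \<noteq> {} \<and> Y \<noteq> {} \<and> X \<inter> Y = {} \<and> X \<union> Y = {0..<n}
       \<and> is_clan n M X \<and> is_clan n M Y)"

definition alpha_linear :: "nat \<Rightarrow> real \<Rightarrow> (nat \<Rightarrow> nat \<Rightarrow> real) \<Rightarrow> bool" where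
  "alpha_linear n \<alpha> M \<longleftrightarrow> \<alpha> > 1/2 \<and>
     (\<exists>x. bij_betw x {0..<n} {0..<n} \<and> (\<forall>i<n. \<forall>j<n. i < j \<longrightarrow> M (x i) (x j) = \<alpha>))"

end

theory Submission
  imports Defs
begin

lemma pm2:
  assumes "i \<noteq> j"
  shows "principal_minor M {i,j} = M i i * M j j - M i j * M j i"
proof -
  have f: "finite {j}" "i \<notin> {j}" using assms by auto
  show ?thesis
    unfolding principal_minor_def
    unfolding sum_over_permutations_insert[OF f]
    unfolding permutes_sing
    using assms by (simp add: sign_swap_id sign_id mult.commute)
qed

lemma pm3:
  assumes "i \<noteq> j" "i \<noteq> k" "j \<noteq> k"
  shows "principal_minor M {i,j,k} =
    M i i * M j j * M k k + M i j * M j k * M k i + M i k * M j i * M k j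
    - M i i * M j k * M k j - M i j * M j i * M k k - M i k * M j j * M k i"
proof -
  have f1: "finite {j,k}" "i \<notin> {j,k}" using assms by auto
  have f2: "finite {k}" "j \<notin> {k}" using assms by auto
  show ?thesis
    unfolding principal_minor_def
    unfolding sum_over_permutations_insert[OF f1]
    unfolding sum_over_permutations_insert[OF f2]
    unfolding permutes_sing
    using assms by (simp add: sign_swap_id permutation_swap_id sign_compose sign_id algebra_simps)
qed

lemma gt_diag: "gen_tournament n M \<Longrightarrow> i < n \<Longrightarrow> M i i = 0"
  unfolding gen_tournament_def by fastforce

lemma gt_anti: "gen_tournament n M \<Longrightarrow> i < n \<Longrightarrow> j < n \<Longrightarrow> i \<noteq> j \<Longrightarrow> M j i = 1 - M i j"
  unfolding gen_tournament_def by (metis add_diff_cancel_left')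

lemma tri:
  assumes "gen_tournament n M" "i < n" "j < n" "k < n" "i \<noteq> j" "i \<noteq> k" "j \<noteq> k"
  shows "principal_minor M {i,j,k} = M i j * M j k * M k i + M i k * M k j * M j i"
  using pm3[OF assms(5-7), of M] gt_diag[OF assms(1)] assms(2-4) by (simp add: algebra_simps)

lemma pair_vals:
  assumes gA: "gen_tournament n A" and gB: "gen_tournament n B"
    and mn: "\<And>I. I \<subseteq> {0..<n} \<Longrightarrow> card I \<le> 4 \<Longrightarrow> principal_minor A I = principal_minor B I"
    and ij: "i < n" "j < n" "i \<noteq> j"
  shows "B i j = A i j \<or> B i j = 1 - A i j"
proof -
  have "principal_minor A {i,j} = principal_minor B {i,j}"
    by (rule mn) (use ij in auto)
  then have "A i i * A j j - A i j * A j i = B i i * B j j - B i j * B j i"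
    using pm2[OF ij(3)] by metis
  then have "A i j * (1 - A i j) = B i j * (1 - B i j)"
    using gt_diag[OF gA] gt_diag[OF gB] gt_anti[OF gA ij] gt_anti[OF gB ij] ij by simp
  then have "(B i j - A i j) * (B i j - (1 - A i j)) = 0"
    by (simp add: algebra_simps)
  then show ?thesis by auto
qed

lemma F1:
  assumes gA: "gen_tournament n A" and gB: "gen_tournament n B"
    and mn: "\<And>I. I \<subseteq> {0..<n} \<Longrightarrow> card I \<le> 4 \<Longrightarrow> principal_minor A I = principal_minor B I"
    and c: "c \<noteq> 1/2"
    and lt: "l < n" "l' < n" "r < n" and d: "l \<noteq> l'" "l \<noteq> r" "l' \<noteq> r"
    and h: "A l r = c" "A l' r = c" "B l r = 1 - c" "B l' r = c"
  shows "B l l' = 1 - c"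
proof -
  have "principal_minor A {l,l',r} = principal_minor B {l,l',r}"
    by (rule mn) (use lt in \<open>auto simp: card_insert_if\<close>)
  then have e: "A l l' * A l' r * A r l + A l r * A r l' * A l' l
      = B l l' * B l' r * B r l + B l r * B r l' * B l' l"
    using tri[OF gA lt d] tri[OF gB lt d] by simp
  have "A r l = 1 - c" "A r l' = 1 - c" "A l' l = 1 - A l l'"
       "B r l = c" "B r l' = 1 - c" "B l' l = 1 - B l l'"
    using gt_anti[OF gA] gt_anti[OF gB] lt d h by (metis diff_diff_cancel)+
  with e h have "A l l' * c * (1 - c) + c * (1 - c) * (1 - A l l')
      = B l l' * c * c + (1 - c) * (1 - c) * (1 - B l l')" by simp
  then have "(2*c - 1) * (B l l' - (1 - c)) = 0" by (simp add: algebra_simps)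
  with c show ?thesis by auto
qed

lemma F2:
  assumes gA: "gen_tournament n A" and gB: "gen_tournament n B"
    and mn: "\<And>I. I \<subseteq> {0..<n} \<Longrightarrow> card I \<le> 4 \<Longrightarrow> principal_minor A I = principal_minor B I"
    and c: "c \<noteq> 1/2"
    and lt: "l < n" "r < n" "r' < n" and d: "l \<noteq> r" "l \<noteq> r'" "r \<noteq> r'"
    and h: "A l r = c" "A l r' = c" "B l r = 1 - c" "B l r' = c"
  shows "B r r' = c"
proof -
  have "principal_minor A {l,r,r'} = principal_minor B {l,r,r'}"
    by (rule mn) (use lt in \<open>auto simp: card_insert_if\<close>)
  then have e: "A l r * A r r' * A r' l + A l r' * A r' r * A r l
      = B l r * B r r' * B r' l + B l r' * B r' r * B r l"
    using tri[OF gA lt d] tri[OF gB lt d] by simp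
  have "A r l = 1 - c" "A r' l = 1 - c" "A r' r = 1 - A r r'"
       "B r l = c" "B r' l = 1 - c" "B r' r = 1 - B r r'"
    using gt_anti[OF gA] gt_anti[OF gB] lt d h by (metis diff_diff_cancel)+
  with e h have "c * A r r' * (1 - c) + c * (1 - A r r') * (1 - c)
      = (1 - c) * B r r' * (1 - c) + c * (1 - B r r') * c" by simp
  then have "(1 - 2*c) * (B r r' - c) = 0" by (simp add: algebra_simps)
  with c show ?thesis by auto
qed

definition ccut :: "nat \<Rightarrow> (nat \<Rightarrow> nat \<Rightarrow> real) \<Rightarrow> real \<Rightarrow> nat set \<Rightarrow> bool" where
  "ccut n M c L \<longleftrightarrow> L \<subseteq> {0..<n} \<and> (\<forall>l\<in>L. \<forall>r. r < n \<longrightarrow> r \<notin> L \<longrightarrow> M l r = c)"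

definition sep :: "nat \<Rightarrow> (nat \<Rightarrow> nat \<Rightarrow> real) \<Rightarrow> real \<Rightarrow> nat \<Rightarrow> nat \<Rightarrow> bool" where
  "sep n M c u v \<longleftrightarrow> (\<exists>L. ccut n M c L \<and> ((u \<in> L \<and> v < n \<and> v \<notin> L) \<or> (v \<in> L \<and> u < n \<and> u \<notin> L)))"

lemma sep_sym: "sep n M c u v \<longleftrightarrow> sep n M c v u"
  unfolding sep_def by blast

lemma ccut_vals:
  assumes "ccut n M c L" "gen_tournament n M" "i \<in> L" "k < n" "k \<notin> L"
  shows "M i k = c \<and> M k i = 1 - c"
proof -
  have "M i k = c" using assms unfolding ccut_def by blast
  moreover have "i < n" using assms unfolding ccut_def by auto
  ultimately show ?thesis using gt_anti[OF assms(2), of i k] assms by auto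
qed

lemma transfer:
  assumes gA: "gen_tournament n A" and gB: "gen_tournament n B"
    and mn: "\<And>I. I \<subseteq> {0..<n} \<Longrightarrow> card I \<le> 4 \<Longrightarrow> principal_minor A I = principal_minor B I"
    and L: "ccut n A c L" and u: "u \<in> L" and v: "v < n" "v \<notin> L"
  shows "sep n B c u v"
proof -
  have Ln: "L \<subseteq> {0..<n}" using L unfolding ccut_def by auto
  have vals: "B l r = c \<or> B l r = 1 - c" if "l \<in> L" "r < n" "r \<notin> L" for l r
  proof -
    have "A l r = c" using L that unfolding ccut_def by blast
    moreover have "l < n" "l \<noteq> r" using that Ln by auto
    ultimately show ?thesis using pair_vals[OF gA gB mn, of l r] that by auto
  qed
  show ?thesis
  proof (cases "c = 1/2")
    case True
    have cc: "1 - c = c" using True by simp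
    have "B l r = c" if "l \<in> L" "r < n" "r \<notin> L" for l r
      using vals[OF that] cc by metis
    then have "ccut n B c L" unfolding ccut_def using Ln by auto
    then show ?thesis unfolding sep_def using u v by blast
  next
    case c: False
    define N where "N l = {r. r < n \<and> r \<notin> L \<and> B l r = 1 - c}" for l
    have Aval: "A l r = c" if "l \<in> L" "r < n" "r \<notin> L" for l r
      using L that unfolding ccut_def by blast
    have Bc: "B l r = c" if "l \<in> L" "r < n" "r \<notin> L" "r \<notin> N l" for l r
      using vals[OF that(1-3)] that unfolding N_def by auto
    have chain: "N l \<subseteq> N l' \<or> N l' \<subseteq> N l" if "l \<in> L" "l' \<in> L" for l l'
    proof (rule ccontr)
      assume "\<not> ?thesis"
      then obtain r r' where r: "r \<in> N l" "r \<notin> N l'" and r': "r' \<in> N l'" "r' \<notin> N l" by blast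
      have ll: "l \<noteq> l'" using r by auto
      have rn: "r < n" "r \<notin> L" "r' < n" "r' \<notin> L" using r r' unfolding N_def by auto
      have ln: "l < n" "l' < n" using that Ln by auto
      have "B l l' = 1 - c"
        by (rule F1[OF gA gB mn c ln rn(1) ll]) (use that rn r Aval Bc in \<open>auto simp: N_def\<close>)
      moreover have "B l' l = 1 - c"
        by (rule F1[OF gA gB mn c ln(2) ln(1) rn(3)]) (use that rn r' Aval Bc ll in \<open>auto simp: N_def\<close>)
      moreover have "B l' l = 1 - B l l'" using gt_anti[OF gB ln ll] .
      ultimately show False using c by auto
    qed
    have main: "ccut n B c (S \<union> N u)"
      if S: "S \<subseteq> L" and S1: "\<forall>l\<in>S. N l \<subseteq> N u" and S2: "\<forall>l'\<in>L - S. N u \<subseteq> N l'"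
        and S3: "\<forall>l\<in>S. \<forall>l'\<in>L - S. \<exists>r. r \<in> N l' \<and> r \<notin> N l" for S
    proof -
      have un: "u < n" using u Ln by auto
      have "B a b = c" if a: "a \<in> S \<union> N u" and b: "b < n" "b \<notin> S \<union> N u" for a b
      proof (cases "a \<in> S")
        case aS: True
        then have aL: "a \<in> L" using S by auto
        have an: "a < n" using aL Ln by auto
        show ?thesis
        proof (cases "b \<in> L")
          case True
          then have "b \<in> L - S" using b by auto
          then obtain r where r: "r \<in> N b" "r \<notin> N a" using S3 aS by blast
          have rn: "r < n" "r \<notin> L" using r unfolding N_def by auto
          have ab: "a \<noteq> b" using aS b by auto
          have "B b a = 1 - c"
            by (rule F1[OF gA gB mn c b(1) an rn(1)])
               (use ab rn r aL True Aval Bc in \<open>auto simp: N_def\<close>)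
          then show ?thesis using gt_anti[OF gB an b(1) ab] by simp
        next
          case False
          then have "b \<notin> N a" using S1 aS b by auto
          then show ?thesis using Bc aL b False by auto
        qed
      next
        case False
        then have aN: "a \<in> N u" using a by auto
        then have an: "a < n" "a \<notin> L" "B u a = 1 - c" unfolding N_def by auto
        show ?thesis
        proof (cases "b \<in> L")
          case True
          then have "b \<in> L - S" using b by auto
          then have "a \<in> N b" using S2 aN by auto
          then have "B b a = 1 - c" unfolding N_def by auto
          moreover have "a \<noteq> b" using True an by auto
          ultimately show ?thesis using gt_anti[OF gB b(1) an(1)] by simp
        next
          case bL: False
          have bu: "b \<notin> N u" using b by auto
          have "B u b = c" using Bc[OF u b(1) bL bu] .
          moreover have "a \<noteq> b" using aN bu by auto
          moreover have "u \<noteq> a" "u \<noteq> b" using u an bL by auto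
          ultimately show ?thesis
            using F2[OF gA gB mn c un an(1) b(1)] Aval[OF u an(1,2)] Aval[OF u b(1) bL] an(3) by auto
        qed
      qed
      moreover have "S \<union> N u \<subseteq> {0..<n}" using S Ln unfolding N_def by auto
      ultimately show ?thesis unfolding ccut_def by auto
    qed
    show ?thesis
    proof (cases "B u v = c")
      case True
      define S where "S = {l \<in> L. N l \<subseteq> N u}"
      have "ccut n B c (S \<union> N u)"
      proof (rule main)
        show "S \<subseteq> L" unfolding S_def by auto
        show "\<forall>l\<in>S. N l \<subseteq> N u" unfolding S_def by auto
        show "\<forall>l'\<in>L - S. N u \<subseteq> N l'" unfolding S_def using chain u by blast
        show "\<forall>l\<in>S. \<forall>l'\<in>L - S. \<exists>r. r \<in> N l' \<and> r \<notin> N l" unfolding S_def by blast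
      qed
      moreover have "u \<in> S \<union> N u" using u unfolding S_def by auto
      moreover have "v \<notin> S \<union> N u" using v True c unfolding S_def N_def by auto
      ultimately show ?thesis unfolding sep_def using v by blast
    next
      case False
      then have BV: "B u v = 1 - c" using vals[OF u v] by auto
      define S where "S = {l \<in> L. N l \<subset> N u}"
      have "ccut n B c (S \<union> N u)"
      proof (rule main)
        show "S \<subseteq> L" unfolding S_def by auto
        show "\<forall>l\<in>S. N l \<subseteq> N u" unfolding S_def by auto
        show "\<forall>l'\<in>L - S. N u \<subseteq> N l'" unfolding S_def using chain u by blast
        show "\<forall>l\<in>S. \<forall>l'\<in>L - S. \<exists>r. r \<in> N l' \<and> r \<notin> N l"
          unfolding S_def using chain u by blast
      qed
      moreover have "v \<in> S \<union> N u" using v BV unfolding N_def by auto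
      moreover have "u \<notin> S \<union> N u" using u unfolding S_def N_def by auto
      moreover have "u < n" using u Ln by auto
      ultimately show ?thesis unfolding sep_def by blast
    qed
  qed
qed

lemma transfer_sep:
  assumes gA: "gen_tournament n A" and gB: "gen_tournament n B"
    and mn: "\<And>I. I \<subseteq> {0..<n} \<Longrightarrow> card I \<le> 4 \<Longrightarrow> principal_minor A I = principal_minor B I"
    and s: "sep n A c u v"
  shows "sep n B c u v"
proof -
  obtain L where L: "ccut n A c L" and h: "(u \<in> L \<and> v < n \<and> v \<notin> L) \<or> (v \<in> L \<and> u < n \<and> u \<notin> L)"
    using s unfolding sep_def by blast
  from h show ?thesis
  proof
    assume "u \<in> L \<and> v < n \<and> v \<notin> L"
    then show ?thesis using transfer[OF gA gB mn L] by blast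
  next
    assume "v \<in> L \<and> u < n \<and> u \<notin> L"
    then show ?thesis using transfer[OF gA gB mn L] sep_sym by blast
  qed
qed

lemma sep_same_side:
  assumes "\<not> sep n M c u i" "ccut n M c L" "u < n" "i < n"
  shows "u \<in> L \<longleftrightarrow> i \<in> L"
  using assms unfolding sep_def by blast

lemma P_clan:
  assumes g: "gen_tournament n M" and u: "u < n"
  shows "is_clan n M {w. w < n \<and> \<not> sep n M c u w}"
  unfolding is_clan_def
proof (intro conjI)
  show "{w. w < n \<and> \<not> sep n M c u w} \<subseteq> {0..<n}" by auto
next
  show "\<forall>i\<in>{w. w < n \<and> \<not> sep n M c u w}. \<forall>j\<in>{w. w < n \<and> \<not> sep n M c u w}.
     \<forall>k\<in>{0..<n} - {w. w < n \<and> \<not> sep n M c u w}. M i k = M j k \<and> M k i = M k j"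
  proof (intro ballI)
  fix i j k
  assume i: "i \<in> {w. w < n \<and> \<not> sep n M c u w}" and j: "j \<in> {w. w < n \<and> \<not> sep n M c u w}"
    and k: "k \<in> {0..<n} - {w. w < n \<and> \<not> sep n M c u w}"
  then have kn: "k < n" and sk: "sep n M c u k" by auto
  obtain L where L: "ccut n M c L" and h: "(u \<in> L \<and> k \<notin> L) \<or> (k \<in> L \<and> u \<notin> L)"
    using sk unfolding sep_def by blast
  have iL: "u \<in> L \<longleftrightarrow> i \<in> L" using sep_same_side[OF _ L u] i by auto
  have jL: "u \<in> L \<longleftrightarrow> j \<in> L" using sep_same_side[OF _ L u] j by auto
  have "i < n" "j < n" using i j by auto
  from h show "M i k = M j k \<and> M k i = M k j"
  proof
    assume "u \<in> L \<and> k \<notin> L"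
    then show ?thesis using ccut_vals[OF L g _ kn, of i] ccut_vals[OF L g _ kn, of j] iL jL by auto
  next
    assume "k \<in> L \<and> u \<notin> L"
    then show ?thesis using ccut_vals[OF L g, of k i] ccut_vals[OF L g, of k j] iL jL \<open>i < n\<close> \<open>j < n\<close> by auto
  qed
  qed
qed

lemma sep_val:
  assumes "sep n M c u v" "gen_tournament n M"
  shows "M u v = c \<or> M v u = c"
  using assms ccut_vals unfolding sep_def by metis

lemma lin:
  assumes g: "gen_tournament n M" and a: "\<alpha> > 1/2"
    and tot: "\<And>u v. u < n \<Longrightarrow> v < n \<Longrightarrow> u \<noteq> v \<Longrightarrow> M u v = \<alpha> \<or> M v u = \<alpha>"
    and tr: "\<And>u v w. u < n \<Longrightarrow> v < n \<Longrightarrow> w < n \<Longrightarrow> u \<noteq> v \<Longrightarrow> v \<noteq> w \<Longrightarrow> u \<noteq> w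
       \<Longrightarrow> M u v = \<alpha> \<Longrightarrow> M v w = \<alpha> \<Longrightarrow> M u w = \<alpha>"
  shows "alpha_linear n \<alpha> M"
proof -
  have asym: "\<not> (M u v = \<alpha> \<and> M v u = \<alpha>)" if "u < n" "v < n" for u v
  proof (cases "u = v")
    case True then show ?thesis using gt_diag[OF g that(1)] a by auto
  next
    case False then show ?thesis using gt_anti[OF g that False] a by auto
  qed
  define rank where "rank v = card {u. u < n \<and> M u v = \<alpha>}" for v
  have rless: "rank u < rank v" if "u < n" "v < n" "M u v = \<alpha>" for u v
  proof -
    have uv: "u \<noteq> v" using asym that by auto
    have "{w. w < n \<and> M w u = \<alpha>} \<subset> {w. w < n \<and> M w v = \<alpha>}"
    proof
      have "M w v = \<alpha>" if w: "w < n" "M w u = \<alpha>" for w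
      proof -
        have "w \<noteq> u" using w asym \<open>u < n\<close> by auto
        moreover have "w \<noteq> v" using w asym \<open>u < n\<close> \<open>v < n\<close> \<open>M u v = \<alpha>\<close> by auto
        ultimately show "M w v = \<alpha>" using tr[of w u v] w \<open>u < n\<close> \<open>v < n\<close> \<open>M u v = \<alpha>\<close> uv by auto
      qed
      then show "{w. w < n \<and> M w u = \<alpha>} \<subseteq> {w. w < n \<and> M w v = \<alpha>}" by auto
      show "{w. w < n \<and> M w u = \<alpha>} \<noteq> {w. w < n \<and> M w v = \<alpha>}"
        using that asym by auto
    qed
    then show ?thesis unfolding rank_def by (rule psubset_card_mono[rotated]) auto
  qed
  have rn: "rank v < n" if "v < n" for v
  proof -
    have "{u. u < n \<and> M u v = \<alpha>} \<subseteq> {0..<n} - {v}" using asym that by auto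
    then have "rank v \<le> card ({0..<n} - {v})" unfolding rank_def by (intro card_mono) auto
    then show ?thesis using that by auto
  qed
  have inj: "inj_on rank {0..<n}"
  proof (rule inj_onI)
    fix u v assume "u \<in> {0..<n}" "v \<in> {0..<n}" "rank u = rank v"
    then show "u = v" using tot[of u v] rless[of u v] rless[of v u] by fastforce
  qed
  have im: "rank ` {0..<n} = {0..<n}"
    by (rule endo_inj_surj) (use rn inj in auto)
  have bij: "bij_betw rank {0..<n} {0..<n}" using inj im unfolding bij_betw_def by auto
  define x where "x = inv_into {0..<n} rank"
  have bx: "bij_betw x {0..<n} {0..<n}" unfolding x_def by (rule bij_betw_inv_into[OF bij])
  have rx: "rank (x i) = i" if "i < n" for i
    unfolding x_def using im that by (metis atLeastLessThan_iff f_inv_into_f zero_le)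
  have xn: "x i < n" if "i < n" for i
    using bx that unfolding bij_betw_def by auto
  have "M (x i) (x j) = \<alpha>" if "i < n" "j < n" "i < j" for i j
  proof -
    have "x i \<noteq> x j"
    proof
      assume "x i = x j"
      then have "rank (x i) = rank (x j)" by simp
      then show False using rx[OF that(1)] rx[OF that(2)] that(3) by simp
    qed
    then have "M (x i) (x j) = \<alpha> \<or> M (x j) (x i) = \<alpha>" using tot[OF xn[OF that(1)] xn[OF that(2)]] by blast
    moreover have "\<not> M (x j) (x i) = \<alpha>"
      using rless[OF xn[OF that(2)] xn[OF that(1)]] rx[OF that(1)] rx[OF that(2)] that(3) by auto
    ultimately show ?thesis by auto
  qed
  then show ?thesis unfolding alpha_linear_def using a bx by blast
qed

lemma lin_from_sep:
  assumes g: "gen_tournament n M" and c: "c \<noteq> 1/2"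
    and all: "\<And>u v. u < n \<Longrightarrow> v < n \<Longrightarrow> u \<noteq> v \<Longrightarrow> sep n M c u v"
  shows "alpha_linear n (max c (1 - c)) M"
proof -
  have tot: "M u v = c \<or> M v u = c" if "u < n" "v < n" "u \<noteq> v" for u v
    using sep_val[OF all[OF that] g] .
  have tr: "M u w = c" if hyp: "u < n" "v < n" "w < n" "u \<noteq> v" "v \<noteq> w" "u \<noteq> w"
    "M u v = c" "M v w = c" for u v w
  proof -
    obtain L where L: "ccut n M c L" and h: "(u \<in> L \<and> w \<notin> L) \<or> (w \<in> L \<and> u \<notin> L)"
      using all[OF hyp(1,3,6)] unfolding sep_def by blast
    have uvs: "M v u = 1 - c" "M w v = 1 - c"
      using gt_anti[OF g hyp(1) hyp(2) hyp(4)] gt_anti[OF g hyp(2) hyp(3) hyp(5)] hyp(7,8) by auto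
    from h show ?thesis
    proof
      assume "u \<in> L \<and> w \<notin> L" then show ?thesis using ccut_vals[OF L g, of u w] hyp(3) by blast
    next
      assume h2: "w \<in> L \<and> u \<notin> L"
      show ?thesis
      proof (cases "v \<in> L")
        case True
        then have "M v u = c" using ccut_vals[OF L g, of v u] h2 hyp(1) by blast
        then show ?thesis using uvs c by auto
      next
        case False
        then have "M w v = c" using ccut_vals[OF L g, of w v] h2 hyp(2) by blast
        then show ?thesis using uvs c by auto
      qed
    qed
  qed
  show ?thesis
  proof (cases "c > 1/2")
    case True
    then have m: "max c (1 - c) = c" by auto
    show ?thesis unfolding m by (rule lin[OF g True tot tr])
  next
    case False
    then have m: "max c (1 - c) = 1 - c" by auto
    have iff: "M u v = 1 - c \<longleftrightarrow> M v u = c" if "u < n" "v < n" "u \<noteq> v" for u v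
      using gt_anti[OF g that] by auto
    show ?thesis unfolding m
    proof (rule lin[OF g])
      show "1 - c > 1/2" using False c by auto
      show "M u v = 1 - c \<or> M v u = 1 - c" if "u < n" "v < n" "u \<noteq> v" for u v
        using tot[OF that] iff[OF that] iff[of v u] that by auto
      show "M u w = 1 - c" if "u < n" "v < n" "w < n" "u \<noteq> v" "v \<noteq> w" "u \<noteq> w"
        "M u v = 1 - c" "M v w = 1 - c" for u v w
      proof -
        have "M v u = c" using iff[of u v] that by auto
        moreover have "M w v = c" using iff[of v w] that by auto
        ultimately have "M w u = c" using tr[of w v u] that by auto
        then show ?thesis using iff[of u w] that by auto
      qed
    qed
  qed
qed

lemma half_vals:
  assumes g: "gen_tournament n M" and c: "c = 1/2"
    and all: "\<And>u v. u < n \<Longrightarrow> v < n \<Longrightarrow> u \<noteq> v \<Longrightarrow> sep n M c u v"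
    and uv: "u < n" "v < n" "u \<noteq> v"
  shows "M u v = 1/2"
proof -
  have "M u v = c \<or> M v u = c" using sep_val[OF all[OF uv] g] .
  moreover have "M v u = 1 - M u v" using gt_anti[OF g uv] .
  ultimately show ?thesis using c by auto
qed

theorem proposition5p8:
  fixes n :: nat and A B :: "nat \<Rightarrow> nat \<Rightarrow> real"
  assumes "n \<ge> 3"
    and "gen_tournament n A" and "gen_tournament n B"
    and "\<And>I. I \<subseteq> {0..<n} \<Longrightarrow> card I \<le> 4 \<Longrightarrow> principal_minor A I = principal_minor B I"
    and "separable n A"
    and "\<not> (\<exists>\<alpha>>1/2. alpha_linear n \<alpha> A \<and> alpha_linear n \<alpha> B)"
  shows "\<exists>X. is_clan n A X \<and> is_clan n B X \<and> \<not> trivial_clan n X"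
proof -
  note n3 = assms(1) and gA = assms(2) and gB = assms(3) and mn = assms(4)
  have mn': "\<And>I. I \<subseteq> {0..<n} \<Longrightarrow> card I \<le> 4 \<Longrightarrow> principal_minor B I = principal_minor A I"
    using mn by metis
  obtain X Y where XY: "X \<noteq> {}" "Y \<noteq> {}" "X \<inter> Y = {}" "X \<union> Y = {0..<n}"
    "is_clan n A X" "is_clan n A Y"
    using assms(5) unfolding separable_def by blast
  obtain x0 y0 where x0: "x0 \<in> X" and y0: "y0 \<in> Y" using XY by blast
  define c where "c = A x0 y0"
  have cutX: "ccut n A c X"
    unfolding ccut_def
  proof (intro conjI ballI allI impI)
    show "X \<subseteq> {0..<n}" using XY by auto
    fix x y assume x: "x \<in> X" and y: "y < n" "y \<notin> X"
    then have yY: "y \<in> Y" using XY by auto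
    have x0n: "x0 \<in> {0..<n} - Y" using x0 XY by auto
    have yn: "y \<in> {0..<n} - X" using y by auto
    have "A x y = A x0 y" using XY(5) x x0 yn unfolding is_clan_def by blast
    also have "\<dots> = A x0 y0" using XY(6) yY y0 x0n unfolding is_clan_def by blast
    finally show "A x y = c" unfolding c_def .
  qed
  have x0n: "x0 < n" and y0n: "y0 < n" "y0 \<notin> X" using x0 y0 XY by auto
  show ?thesis
  proof (cases "\<exists>u v. u < n \<and> v < n \<and> u \<noteq> v \<and> \<not> sep n A c u v")
    case True
    then obtain u v where uv: "u < n" "v < n" "u \<noteq> v" "\<not> sep n A c u v" by blast
    define P where "P = {w. w < n \<and> \<not> sep n A c u w}"
    have PB: "P = {w. w < n \<and> \<not> sep n B c u w}"
    proof -
      have "sep n A c u w \<longleftrightarrow> sep n B c u w" for w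
        using transfer_sep[OF gA gB mn, of c u w] transfer_sep[OF gB gA mn', of c u w] by blast
      then show ?thesis unfolding P_def by simp
    qed
    have cA: "is_clan n A P" unfolding P_def by (rule P_clan[OF gA uv(1)])
    have cB: "is_clan n B P" unfolding PB by (rule P_clan[OF gB uv(1)])
    have nsu: "\<not> sep n A c u u" by (simp add: sep_def)
    have uvP: "u \<in> P" "v \<in> P" unfolding P_def using uv(1,2,4) nsu by simp_all
    have fP: "finite P" unfolding P_def by auto
    have "card {u, v} \<le> card P" using uvP fP by (intro card_mono) auto
    moreover have "card {u, v} = 2" using uv(3) by simp
    ultimately have cP: "card P \<ge> 2" by simp
    have "\<exists>w. w < n \<and> sep n A c u w"
    proof (cases "u \<in> X")
      case True
      have "ccut n A c X \<and> ((u \<in> X \<and> y0 < n \<and> y0 \<notin> X) \<or> (y0 \<in> X \<and> u < n \<and> u \<notin> X))"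
        using cutX True y0n by simp
      then have "sep n A c u y0" unfolding sep_def by (rule exI)
      then show ?thesis using y0n by blast
    next
      case False
      have "ccut n A c X \<and> ((u \<in> X \<and> x0 < n \<and> x0 \<notin> X) \<or> (x0 \<in> X \<and> u < n \<and> u \<notin> X))"
        using cutX x0 False uv(1) by simp
      then have "sep n A c u x0" unfolding sep_def by (rule exI)
      then show ?thesis using x0n by blast
    qed
    then obtain w where w: "w < n" "sep n A c u w" by blast
    then have "w \<notin> P" unfolding P_def by simp
    moreover have "w \<in> {0..<n}" using w by simp
    ultimately have PV: "P \<noteq> {0..<n}" by blast
    have Pne: "P \<noteq> {}" using uvP by blast
    have c1: "card P \<noteq> 1" using cP by simp
    have "\<not> trivial_clan n P" unfolding trivial_clan_def using PV Pne c1 by blast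
    then show ?thesis using cA cB by blast
  next
    case False
    then have allA: "\<And>u v. u < n \<Longrightarrow> v < n \<Longrightarrow> u \<noteq> v \<Longrightarrow> sep n A c u v" by blast
    have allB: "\<And>u v. u < n \<Longrightarrow> v < n \<Longrightarrow> u \<noteq> v \<Longrightarrow> sep n B c u v"
      by (rule transfer_sep[OF gA gB mn allA])
    show ?thesis
    proof (cases "c = 1/2")
      case True
      have hA: "\<And>u v. u < n \<Longrightarrow> v < n \<Longrightarrow> u \<noteq> v \<Longrightarrow> A u v = 1/2"
        by (rule half_vals[OF gA True allA])
      have hB: "\<And>u v. u < n \<Longrightarrow> v < n \<Longrightarrow> u \<noteq> v \<Longrightarrow> B u v = 1/2"
        by (rule half_vals[OF gB True allB])
      have sub: "{0,1} \<subseteq> {0..<n}" using n3 by auto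
      have eA: "A 0 k = A 1 k \<and> A k 0 = A k 1" if "k < n" "k \<noteq> 0" "k \<noteq> 1" for k
      proof -
        have "A 0 k = 1/2" "A 1 k = 1/2" "A k 0 = 1/2" "A k 1 = 1/2"
          by (rule hA; use that n3 in simp)+
        then show ?thesis by simp
      qed
      have "\<forall>i\<in>{0,1}. \<forall>j\<in>{0,1}. \<forall>k\<in>{0..<n} - {0,1}. A i k = A j k \<and> A k i = A k j"
      proof (intro ballI)
        fix i j k assume i: "i \<in> {0::nat,1}" and j: "j \<in> {0::nat,1}" and k: "k \<in> {0..<n} - {0,1}"
        have kk: "k < n" "k \<noteq> 0" "k \<noteq> 1" using k by auto
        have e: "A 0 k = A 1 k \<and> A k 0 = A k 1" by (rule eA[OF kk])
        from i j e show "A i k = A j k \<and> A k i = A k j" by fastforce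
      qed
      then have cA0: "is_clan n A {0,1}" unfolding is_clan_def using sub by blast
      have eB: "B 0 k = B 1 k \<and> B k 0 = B k 1" if "k < n" "k \<noteq> 0" "k \<noteq> 1" for k
      proof -
        have "B 0 k = 1/2" "B 1 k = 1/2" "B k 0 = 1/2" "B k 1 = 1/2"
          by (rule hB; use that n3 in simp)+
        then show ?thesis by simp
      qed
      have "\<forall>i\<in>{0,1}. \<forall>j\<in>{0,1}. \<forall>k\<in>{0..<n} - {0,1}. B i k = B j k \<and> B k i = B k j"
      proof (intro ballI)
        fix i j k assume i: "i \<in> {0::nat,1}" and j: "j \<in> {0::nat,1}" and k: "k \<in> {0..<n} - {0,1}"
        have kk: "k < n" "k \<noteq> 0" "k \<noteq> 1" using k by auto
        have e: "B 0 k = B 1 k \<and> B k 0 = B k 1" by (rule eB[OF kk])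
        from i j e show "B i k = B j k \<and> B k i = B k j" by fastforce
      qed
      then have cB0: "is_clan n B {0,1}" unfolding is_clan_def using sub by blast
      have nt0: "\<not> trivial_clan n {0,1}"
      proof -
        have "(2::nat) \<in> {0..<n}" using n3 by auto
        have "{0,1} \<noteq> {0..<n}"
        proof
          assume "{0,1} = {0..<n}"
          then have "(2::nat) \<in> {0,1}" using \<open>(2::nat) \<in> {0..<n}\<close> by simp
          then show False by simp
        qed
        moreover have "card {0::nat,1} = 2" by simp
        ultimately show ?thesis unfolding trivial_clan_def by auto
      qed
      show ?thesis using cA0 cB0 nt0 by blast
    next
      case False
      have "alpha_linear n (max c (1 - c)) A" by (rule lin_from_sep[OF gA False allA])
      moreover have "alpha_linear n (max c (1 - c)) B" by (rule lin_from_sep[OF gB False allB])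
      moreover have "max c (1 - c) > 1/2" unfolding max_def using False by auto
      ultimately have "\<exists>\<alpha>>1/2. alpha_linear n \<alpha> A \<and> alpha_linear n \<alpha> B" by blast
      with assms(6) show ?thesis by blast
    qed
  qed
qed

end
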